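(* Let $Q$ be a finite Moufang loop whose order is divisible by $3$. If the nucleus of $Q$ is trivial, then $Q$ possesses a proper subloop whose order is divisible by $3$.
   Context: A loop is a magma with identity in which all left and right translations are bijections; it is Moufang if it satisfies $xy\cdot zx=(x\cdot yz)x$. The nucleus of $Q$ is the set of $x\in Q$ with $x(yz)=(xy)z$, $y(xz)=(yx)z$ and $y(zx)=(yz)x$ for all $y,z\in Q$. *)

theory Defs
  imports Main
begin

definition loop :: "'a set \<Rightarrow> ('a \<Rightarrow> 'a \<Rightarrow> 'a) \<Rightarrow> 'a \<Rightarrow> bool" where
  "loop Q mult e \<longleftrightarrow>
     e \<in> Q \<and>
     (\<forall>x\<in>Q. \<forall>y\<in>Q. mult x y \<in> Q) \<and>
     (\<forall>x\<in>Q. mult e x = x \<and> mult x e = x) \<and>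
     (\<forall>x\<in>Q. bij_betw (\<lambda>y. mult x y) Q Q) \<and>
     (\<forall>x\<in>Q. bij_betw (\<lambda>y. mult y x) Q Q)"

definition moufang_loop :: "'a set \<Rightarrow> ('a \<Rightarrow> 'a \<Rightarrow> 'a) \<Rightarrow> 'a \<Rightarrow> bool" where
  "moufang_loop Q mult e \<longleftrightarrow> loop Q mult e \<and>
     (\<forall>x\<in>Q. \<forall>y\<in>Q. \<forall>z\<in>Q.
        mult (mult x y) (mult z x) = mult (mult x (mult y z)) x)"

definition nucleus :: "'a set \<Rightarrow> ('a \<Rightarrow> 'a \<Rightarrow> 'a) \<Rightarrow> 'a set" where
  "nucleus Q mult = {x \<in> Q. \<forall>y\<in>Q. \<forall>z\<in>Q.
       mult x (mult y z) = mult (mult x y) z \<and>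
       mult y (mult x z) = mult (mult y x) z \<and>
       mult y (mult z x) = mult (mult y z) x}"

definition subloop :: "'a set \<Rightarrow> ('a \<Rightarrow> 'a \<Rightarrow> 'a) \<Rightarrow> 'a \<Rightarrow> 'a set \<Rightarrow> bool" where
  "subloop Q mult e H \<longleftrightarrow> H \<subseteq> Q \<and> loop H mult e"

end

theory Submission
  imports Defs
begin

lemma orbit3:
  assumes "finite B" "\<forall>x\<in>B. f x \<in> B" "\<forall>x\<in>B. f (f (f x)) = x" "\<forall>x\<in>B. f x \<noteq> x"
  shows "3 dvd card B"
  using assms
proof (induction B rule: finite_psubset_induct)
  case (psubset B)
  show ?case
  proof (cases "B = {}")
    case True thus ?thesis by simp
  next
    case False
    then obtain x where x: "x \<in> B" by auto
    let ?O = "{x, f x, f (f x)}"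
    have sub: "?O \<subseteq> B" using x psubset.prems by auto
    have d1: "x \<noteq> f x" using x psubset.prems by auto
    have d2: "f x \<noteq> f (f x)" using x psubset.prems by auto
    have d3: "x \<noteq> f (f x)"
    proof
      assume h: "x = f (f x)"
      hence "f x = f (f (f x))" by simp
      also have "\<dots> = x" using x psubset.prems by auto
      finally show False using d1 by simp
    qed
    have cO: "card ?O = 3" using d1 d2 d3 by auto
    have inv: "\<forall>y\<in>B - ?O. f y \<in> B - ?O"
    proof
      fix y assume y: "y \<in> B - ?O"
      have fy: "f y \<in> B" using y psubset.prems by auto
      have yy: "f (f (f y)) = y" using y psubset.prems by auto
      have xx: "f (f (f x)) = x" using x psubset.prems by auto
      have "f y \<noteq> x" using yy y by auto
      moreover have "f y \<noteq> f x" using yy xx y by (metis DiffE insertCI)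
      moreover have "f y \<noteq> f (f x)"
      proof
        assume "f y = f (f x)"
        hence "f (f (f y)) = f (f (f (f x)))" by simp
        hence "y = f x" using yy xx by simp
        thus False using y by auto
      qed
      ultimately show "f y \<in> B - ?O" using fy by auto
    qed
    have "B - ?O \<subset> B" using x by auto
    hence "3 dvd card (B - ?O)"
      using psubset.IH[of "B - ?O"] inv psubset.prems by auto
    moreover have "card (B - ?O) = card B - 3"
      using card_Diff_subset[OF _ sub] cO by auto
    moreover have "card B \<ge> 3" using card_mono[OF psubset.hyps(1) sub] cO by simp
    ultimately show ?thesis
      by (metis dvd_add_triv_right_iff le_add_diff_inverse2 add.commute)
  qed
qed

locale mfl =
  fixes Q :: "'a set" and m :: "'a \<Rightarrow> 'a \<Rightarrow> 'a" and e :: 'a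
  assumes mf: "moufang_loop Q m e"
begin

lemma e_in: "e \<in> Q" using mf unfolding moufang_loop_def loop_def by auto
lemma cl: "x\<in>Q \<Longrightarrow> y\<in>Q \<Longrightarrow> m x y \<in> Q" using mf unfolding moufang_loop_def loop_def by auto
lemma lid: "x\<in>Q \<Longrightarrow> m e x = x" using mf unfolding moufang_loop_def loop_def by auto
lemma rid: "x\<in>Q \<Longrightarrow> m x e = x" using mf unfolding moufang_loop_def loop_def by auto
lemma lbij: "x\<in>Q \<Longrightarrow> bij_betw (\<lambda>y. m x y) Q Q" using mf unfolding moufang_loop_def loop_def by auto
lemma rbij: "x\<in>Q \<Longrightarrow> bij_betw (\<lambda>y. m y x) Q Q" using mf unfolding moufang_loop_def loop_def by auto
lemma M: "x\<in>Q \<Longrightarrow> y\<in>Q \<Longrightarrow> z\<in>Q \<Longrightarrow> m (m x y) (m z x) = m (m x (m y z)) x"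
  using mf unfolding moufang_loop_def by auto

lemma lcanc: "x\<in>Q \<Longrightarrow> y\<in>Q \<Longrightarrow> z\<in>Q \<Longrightarrow> m x y = m x z \<Longrightarrow> y = z"
  using lbij[of x] unfolding bij_betw_def inj_on_def by auto
lemma rcanc: "x\<in>Q \<Longrightarrow> y\<in>Q \<Longrightarrow> z\<in>Q \<Longrightarrow> m y x = m z x \<Longrightarrow> y = z"
  using rbij[of x] unfolding bij_betw_def inj_on_def by auto
lemma rinv_ex: "x\<in>Q \<Longrightarrow> \<exists>y\<in>Q. m x y = e"
proof -
  assume "x \<in> Q"
  hence "e \<in> (\<lambda>y. m x y) ` Q" using lbij[of x] e_in unfolding bij_betw_def by auto
  thus ?thesis by auto
qed

definition iv where "iv x = (SOME y. y \<in> Q \<and> m x y = e)"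

lemma iv: "x\<in>Q \<Longrightarrow> iv x \<in> Q \<and> m x (iv x) = e"
  unfolding iv_def using rinv_ex[of x] by (metis (mono_tags, lifting) someI_ex)

lemma ivQ: "x\<in>Q \<Longrightarrow> iv x \<in> Q" using iv by auto
lemma ivr: "x\<in>Q \<Longrightarrow> m x (iv x) = e" using iv by auto

lemma flex: "x\<in>Q \<Longrightarrow> z\<in>Q \<Longrightarrow> m x (m z x) = m (m x z) x"
  using M[of x e z] e_in by (simp add: rid lid)

lemma lip: "x\<in>Q \<Longrightarrow> z\<in>Q \<Longrightarrow> m x (m (iv x) z) = z"
proof -
  assume x: "x\<in>Q" and z: "z\<in>Q"
  have "m (m x (iv x)) (m z x) = m (m x (m (iv x) z)) x" using M[OF x ivQ[OF x] z] .
  hence "m z x = m (m x (m (iv x) z)) x" using ivr[OF x] lid cl x z by simp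
  thus ?thesis using rcanc[of x] x z cl ivQ by metis
qed

lemma ivl: "x\<in>Q \<Longrightarrow> m (iv x) x = e"
proof -
  assume x: "x\<in>Q"
  have "m x (m (iv x) x) = m x e" using lip[OF x x] rid[OF x] by simp
  thus ?thesis using lcanc x cl ivQ e_in by metis
qed

lemma iv_unique: "x\<in>Q \<Longrightarrow> y\<in>Q \<Longrightarrow> m x y = e \<Longrightarrow> y = iv x"
  using lcanc ivr ivQ by metis

lemma iviv: "x\<in>Q \<Longrightarrow> iv (iv x) = x"
  using iv_unique[of "iv x" x] ivl ivQ by metis

lemma lip2: "x\<in>Q \<Longrightarrow> z\<in>Q \<Longrightarrow> m (iv x) (m x z) = z"
  using lip[of "iv x" z] iviv ivQ by metis

lemma rip: "x\<in>Q \<Longrightarrow> y\<in>Q \<Longrightarrow> m (m y (iv x)) x = y"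
proof -
  assume x: "x\<in>Q" and y: "y\<in>Q"
  have "m (m x y) (m (iv x) x) = m (m x (m y (iv x))) x" using M[OF x y ivQ[OF x]] .
  also have "\<dots> = m x (m (m y (iv x)) x)" using flex[of x "m y (iv x)"] x y cl ivQ by simp
  finally have "m x y = m x (m (m y (iv x)) x)" using ivl[OF x] rid cl x y by simp
  thus ?thesis using lcanc x y cl ivQ by metis
qed

lemma rip2: "x\<in>Q \<Longrightarrow> y\<in>Q \<Longrightarrow> m (m y x) (iv x) = y"
  using rip[of "iv x" y] iviv ivQ by metis

lemma aaip: "a\<in>Q \<Longrightarrow> b\<in>Q \<Longrightarrow> iv (m a b) = m (iv b) (iv a)"
proof -
  assume a: "a\<in>Q" and b: "b\<in>Q"
  define u where "u = m a b"
  have u: "u \<in> Q" using a b cl u_def by simp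
  have "b = m (iv a) u" using lip2 a b u_def by simp
  hence "m b (iv u) = iv a" using rip2[of u "iv a"] u a ivQ by simp
  hence "m (iv b) (m b (iv u)) = m (iv b) (iv a)" by simp
  thus ?thesis using lip2[of b "iv u"] b u ivQ u_def by simp
qed

end

theorem proposition6p4:
  fixes Q :: "'a set" and mult :: "'a \<Rightarrow> 'a \<Rightarrow> 'a" and e :: 'a
  assumes "moufang_loop Q mult e"
    and "finite Q"
    and "3 dvd card Q"
    and "nucleus Q mult = {e}"
  shows "\<exists>H. subloop Q mult e H \<and> H \<noteq> Q \<and> 3 dvd card H"
proof -
  interpret mfl Q mult e using assms(1) by (unfold_locales)
  define A where "A = Q \<times> Q"
  define g where "g p = (snd p, iv (mult (fst p) (snd p)))" for p
  have gA: "\<forall>p\<in>A. g p \<in> A" unfolding A_def g_def using cl ivQ by auto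
  have g3: "\<forall>p\<in>A. g (g (g p)) = p"
  proof
    fix p assume "p \<in> A"
    then obtain a b where p: "p = (a,b)" and a: "a \<in> Q" and b: "b \<in> Q" unfolding A_def by auto
    have 1: "mult b (iv (mult a b)) = iv a" using aaip a b lip ivQ by simp
    have 2: "mult (iv (mult a b)) a = iv b" using aaip a b rip ivQ by simp
    show "g (g (g p)) = p" unfolding g_def p using 1 2 iviv a b by simp
  qed
  have fA: "finite A" unfolding A_def using assms(2) by simp
  have nf: "3 dvd card {p\<in>A. g p \<noteq> p}"
  proof (rule orbit3)
    show "finite {p\<in>A. g p \<noteq> p}" using fA by simp
    show "\<forall>x\<in>{p\<in>A. g p \<noteq> p}. g (g (g x)) = x" using g3 by auto
    show "\<forall>x\<in>{p\<in>A. g p \<noteq> p}. g x \<noteq> x" by auto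
    show "\<forall>x\<in>{p\<in>A. g p \<noteq> p}. g x \<in> {p\<in>A. g p \<noteq> p}"
    proof
      fix x assume x: "x \<in> {p\<in>A. g p \<noteq> p}"
      have "g (g x) \<noteq> g x"
      proof
        assume "g (g x) = g x"
        hence "g (g (g x)) = g x" by simp
        thus False using g3 x by auto
      qed
      thus "g x \<in> {p\<in>A. g p \<noteq> p}" using gA x by auto
    qed
  qed
  have cA: "3 dvd card A" unfolding A_def using assms(3) by (simp add: card_cartesian_product)
  have "A = {p\<in>A. g p = p} \<union> {p\<in>A. g p \<noteq> p}" by auto
  moreover have "card ({p\<in>A. g p = p} \<union> {p\<in>A. g p \<noteq> p}) = card {p\<in>A. g p = p} + card {p\<in>A. g p \<noteq> p}"
    by (rule card_Un_disjoint) (use fA in auto)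
  ultimately have eqc: "card A = card {p\<in>A. g p = p} + card {p\<in>A. g p \<noteq> p}" by simp
  have fix3: "3 dvd card {p\<in>A. g p = p}" using cA nf unfolding eqc by presburger
  define F where "F = {a\<in>Q. mult (mult a a) a = e}"
  have "{p\<in>A. g p = p} = (\<lambda>a. (a,a)) ` F"
  proof (rule set_eqI, rule iffI)
    fix p assume "p \<in> {p\<in>A. g p = p}"
    then obtain a b where p: "p = (a,b)" and a: "a \<in> Q" and b: "b \<in> Q" and gp: "g p = p"
      unfolding A_def by auto
    have "b = a" "iv (mult a b) = b" using gp unfolding p g_def by auto
    hence "mult (mult a a) a = e" using ivr[OF cl[OF a a]] by simp
    thus "p \<in> (\<lambda>a. (a,a)) ` F" using p \<open>b = a\<close> a F_def by auto
  next
    fix p assume "p \<in> (\<lambda>a. (a,a)) ` F"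
    then obtain a where p: "p = (a,a)" and a: "a \<in> Q" and h: "mult (mult a a) a = e"
      unfolding F_def by auto
    have "iv (mult a a) = a" using iv_unique[of "mult a a" a] h a cl by simp
    thus "p \<in> {p\<in>A. g p = p}" unfolding p g_def A_def using a by simp
  qed
  moreover have "inj_on (\<lambda>a. (a,a)) F" by (auto simp: inj_on_def)
  ultimately have "card {p\<in>A. g p = p} = card F" by (simp add: card_image)
  hence F3: "3 dvd card F" using fix3 by simp
  have eF: "e \<in> F" unfolding F_def using e_in lid by simp
  have fF: "finite F" unfolding F_def using assms(2) by simp
  have "card F \<noteq> 0" using eF fF by auto
  hence "card F \<ge> 3" by (intro dvd_imp_le[OF F3]) simp
  have "\<exists>a\<in>F. a \<noteq> e"
  proof (rule ccontr)
    assume "\<not> ?thesis"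
    hence "F \<subseteq> {e}" by auto
    hence "card F \<le> card {e}" by (intro card_mono) auto
    hence "card F \<le> 1" by simp
    thus False using \<open>card F \<ge> 3\<close> by simp
  qed
  then obtain a where aF: "a \<in> F" and ae: "a \<noteq> e" by auto
  have a: "a \<in> Q" and a3: "mult (mult a a) a = e" using aF F_def by auto
  define b where "b = mult a a"
  have bQ: "b \<in> Q" using a cl b_def by simp
  have ba: "mult b a = e" using a3 b_def by simp
  have ab: "mult a b = e" using flex[OF a a] a3 b_def by simp
  have biv: "b = iv a" using iv_unique[OF a bQ ab] .
  have bb: "mult b b = a" using lip2[OF a a] biv b_def by simp
  have be: "b \<noteq> e"
  proof
    assume "b = e"
    hence "mult e a = e" using ba by simp
    thus False using lid[OF a] ae by simp
  qed
  have bne: "b \<noteq> a"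
  proof
    assume "b = a"
    hence "mult a a = mult a e" using b_def rid[OF a] by simp
    thus False using lcanc[OF a a e_in] ae by simp
  qed
  define H where "H = {e, a, b}"
  have HQ: "H \<subseteq> Q" using H_def e_in a bQ by auto
  have cH: "card H = 3" using H_def ae be bne by auto
  have aa: "mult a a = b" using b_def by simp
  have ee: "mult e e = e" "mult e a = a" "mult a e = a" "mult e b = b" "mult b e = b"
    using lid rid e_in a bQ by auto
  have Hcl: "\<forall>x\<in>H. \<forall>y\<in>H. mult x y \<in> H"
    unfolding H_def by (simp only: ball_simps ab ba bb aa ee insert_iff simp_thms)
  have fH: "finite H" unfolding H_def by simp
  have lH: "loop H mult e"
    unfolding loop_def
  proof (intro conjI ballI)
    show "e \<in> H" unfolding H_def by simp
  next
    fix x y assume "x \<in> H" "y \<in> H" thus "mult x y \<in> H" using Hcl by auto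
  next
    fix x assume "x \<in> H" thus "mult e x = x" using HQ lid by auto
  next
    fix x assume "x \<in> H" thus "mult x e = x" using HQ rid by auto
  next
    fix x assume x: "x \<in> H"
    have inj: "inj_on (\<lambda>y. mult x y) H" using lcanc x HQ unfolding inj_on_def by blast
    have "(\<lambda>y. mult x y) ` H \<subseteq> H" using Hcl x by auto
    hence "(\<lambda>y. mult x y) ` H = H" using endo_inj_surj[OF fH _ inj] by simp
    thus "bij_betw (\<lambda>y. mult x y) H H" using inj unfolding bij_betw_def by simp
  next
    fix x assume x: "x \<in> H"
    have inj: "inj_on (\<lambda>y. mult y x) H" using rcanc x HQ unfolding inj_on_def by blast
    have "(\<lambda>y. mult y x) ` H \<subseteq> H" using Hcl x by auto
    hence "(\<lambda>y. mult y x) ` H = H" using endo_inj_surj[OF fH _ inj] by simp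
    thus "bij_betw (\<lambda>y. mult y x) H H" using inj unfolding bij_betw_def by simp
  qed
  have "H \<noteq> Q"
  proof
    assume HQe: "H = Q"
    have "a \<in> nucleus Q mult"
      unfolding nucleus_def HQe[symmetric]
      by (simp only: H_def mem_Collect_eq ball_simps ab ba bb aa ee insert_iff simp_thms)
    thus False using assms(4) ae by simp
  qed
  thus ?thesis using lH HQ cH unfolding subloop_def by auto
qed

end
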